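(* Let $(S,\wedge,\vee)$ be a skew lattice that is both strongly distributive and co-strongly distributive. Then $S$ is a strong distributive solution of the Yang–Baxter equation, and the associated map $r(x,y)=(x\wedge y,x\vee y)$ satisfies $r^3=r$.
   Context: A skew lattice is a set $S$ with two binary operations $\wedge,\vee$, each idempotent and associative, satisfying the absorption laws $x\wedge(x\vee y)=x=x\vee(x\wedge y)$ and $(x\wedge y)\vee y=y=(x\vee y)\wedge y$ for all $x,y\in S$. $S$ is strongly distributive if it satisfies $(x\vee y)\wedge z=(x\wedge z)\vee(y\wedge z)$ and $x\wedge(y\vee z)=(x\wedge y)\vee(x\wedge z)$; it is co-strongly distributive if it satisfies $(x\wedge y)\vee z=(x\vee z)\wedge(y\vee z)$ and $x\vee(y\wedge z)=(x\vee y)\wedge(x\vee z)$. A map $r:X\times X\to X\times X$ is a set-theoretic solution of the Yang–Baxter equation if $(r\times\mathrm{id})\circ(\mathrm{id}\times r)\circ(r\times\mathrm{id})=(\mathrm{id}\times r)\circ(r\times\mathrm{id})\circ(\mathrm{id}\times r)$. A skew lattice $S$ is a strong distributive solution if the map $r(x,y)=(x\wedge y,x\vee y)$ on $S\times S$ is a set-theoretic solution of the Yang–Baxter equation. *)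

theory Defs
  imports Main
begin

definition skew_lattice :: "('a \<Rightarrow> 'a \<Rightarrow> 'a) \<Rightarrow> ('a \<Rightarrow> 'a \<Rightarrow> 'a) \<Rightarrow> bool" where
  "skew_lattice meet join \<longleftrightarrow>
     (\<forall>x. meet x x = x) \<and> (\<forall>x. join x x = x) \<and>
     (\<forall>x y z. meet (meet x y) z = meet x (meet y z)) \<and>
     (\<forall>x y z. join (join x y) z = join x (join y z)) \<and>
     (\<forall>x y. meet x (join x y) = x \<and> join x (meet x y) = x) \<and>
     (\<forall>x y. join (meet x y) y = y \<and> meet (join x y) y = y)"

definition strongly_distributive :: "('a \<Rightarrow> 'a \<Rightarrow> 'a) \<Rightarrow> ('a \<Rightarrow> 'a \<Rightarrow> 'a) \<Rightarrow> bool" where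
  "strongly_distributive meet join \<longleftrightarrow>
     (\<forall>x y z. meet (join x y) z = join (meet x z) (meet y z)) \<and>
     (\<forall>x y z. meet x (join y z) = join (meet x y) (meet x z))"

definition co_strongly_distributive :: "('a \<Rightarrow> 'a \<Rightarrow> 'a) \<Rightarrow> ('a \<Rightarrow> 'a \<Rightarrow> 'a) \<Rightarrow> bool" where
  "co_strongly_distributive meet join \<longleftrightarrow>
     (\<forall>x y z. join (meet x y) z = meet (join x z) (join y z)) \<and>
     (\<forall>x y z. join x (meet y z) = meet (join x y) (join x z))"

definition is_YB_solution :: "('a \<times> 'a \<Rightarrow> 'a \<times> 'a) \<Rightarrow> bool" where
  "is_YB_solution r \<longleftrightarrow>
     (let r12 = (\<lambda>(x, y, z). (case r (x, y) of (u, v) \<Rightarrow> (u, v, z)));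
          r23 = (\<lambda>(x, y, z). (case r (y, z) of (u, v) \<Rightarrow> (x, u, v)))
      in r12 \<circ> r23 \<circ> r12 = r23 \<circ> r12 \<circ> r23)"

definition skew_map :: "('a \<Rightarrow> 'a \<Rightarrow> 'a) \<Rightarrow> ('a \<Rightarrow> 'a \<Rightarrow> 'a) \<Rightarrow> 'a \<times> 'a \<Rightarrow> 'a \<times> 'a" where
  "skew_map meet join = (\<lambda>(x, y). (meet x y, join x y))"

definition strong_distributive_solution :: "('a \<Rightarrow> 'a \<Rightarrow> 'a) \<Rightarrow> ('a \<Rightarrow> 'a \<Rightarrow> 'a) \<Rightarrow> bool" where
  "strong_distributive_solution meet join \<longleftrightarrow>
     skew_lattice meet join \<and> is_YB_solution (skew_map meet join)"

end

theory Submission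
  imports Defs
begin

locale SL = fixes m j :: "'a \<Rightarrow> 'a \<Rightarrow> 'a"
 assumes mi: "m x x = x" and ji: "j x x = x" and ma: "m (m x y) z = m x (m y z)"
 and ja: "j (j x y) z = j x (j y z)" and ab1: "m x (j x y) = x" and ab2: "j x (m x y) = x"
 and ab3: "j (m x y) y = y" and ab4: "m (j x y) y = y"
 and sd1: "m (j x y) z = j (m x z) (m y z)" and sd2: "m x (j y z) = j (m x y) (m x z)"
 and cd1: "j (m x y) z = m (j x z) (j y z)" and cd2: "j x (m y z) = m (j x y) (j x z)"
begin
lemma e1: "m (m x y) (m (j x y) z) = m (m x y) z" by (metis ab1 ab3 sd1 sd2)
lemma e3: "j (j x y) z = j (j (j x (m y z)) y) z" by (metis ab2 ab3 cd1 ja)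
lemma e2: "j (m x y) (m (j x y) z) = m (j x (m y z)) (j y z)" by (smt (verit, ccfv_threshold) ab2 ab3 cd1 sd1 sd2)
lemma f1: "m (m (m x y) (j x y)) (j (m x y) (j x y)) = m x y" by (metis ab2 ab3 ab4 sd2)
lemma f2: "j (m (m x y) (j x y)) (j (m x y) (j x y)) = j x y" using ab3 e3 ja by fastforce
lemma yb: "is_YB_solution (skew_map m j)"
  unfolding is_YB_solution_def skew_map_def Let_def
proof (rule ext)
  fix t :: "'a \<times> 'a \<times> 'a"
  obtain x y z where t: "t = (x, y, z)" by (cases t) auto
  have g1: "m (m x y) (m (j x y) z) = m x (m y z)" by (subst e1) (rule ma)
  have g3: "j (j x y) z = j (j x (m y z)) (j y z)" by (subst e3) (rule ja)
  have g2: "j (m x y) (m (j x y) z) = m (j x (m y z)) (j y z)" by (rule e2)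
  show "((\<lambda>(x, y, z). case case (x, y) of (x, y) \<Rightarrow> (m x y, j x y) of (u, v) \<Rightarrow> (u, v, z)) \<circ>
         (\<lambda>(x, y, z). case case (y, z) of (x, y) \<Rightarrow> (m x y, j x y) of (u, v) \<Rightarrow> (x, u, v)) \<circ>
         (\<lambda>(x, y, z). case case (x, y) of (x, y) \<Rightarrow> (m x y, j x y) of (u, v) \<Rightarrow> (u, v, z))) t =
        ((\<lambda>(x, y, z). case case (y, z) of (x, y) \<Rightarrow> (m x y, j x y) of (u, v) \<Rightarrow> (x, u, v)) \<circ>
         (\<lambda>(x, y, z). case case (x, y) of (x, y) \<Rightarrow> (m x y, j x y) of (u, v) \<Rightarrow> (u, v, z)) \<circ>
         (\<lambda>(x, y, z). case case (y, z) of (x, y) \<Rightarrow> (m x y, j x y) of (u, v) \<Rightarrow> (x, u, v))) t"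
    unfolding t by (simp only: comp_apply prod.case g1 g2 g3)
qed
lemma r3: "skew_map m j \<circ> skew_map m j \<circ> skew_map m j = skew_map m j"
proof (rule ext)
  fix p :: "'a \<times> 'a" obtain x y where p: "p = (x,y)" by (cases p)
  show "(skew_map m j \<circ> skew_map m j \<circ> skew_map m j) p = skew_map m j p"
    unfolding p skew_map_def comp_apply prod.case f1 f2 ..
qed
end

lemma SLI: assumes "skew_lattice m j" "strongly_distributive m j" "co_strongly_distributive m j"
  shows "SL m j"
proof -
  note a = assms[unfolded skew_lattice_def strongly_distributive_def co_strongly_distributive_def]
  from a(1) have s1: "\<forall>x. m x x = x" "\<forall>x. j x x = x" "\<forall>x y z. m (m x y) z = m x (m y z)"
     "\<forall>x y z. j (j x y) z = j x (j y z)" "\<forall>x y. m x (j x y) = x" "\<forall>x y. j x (m x y) = x"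
     "\<forall>x y. j (m x y) y = y" "\<forall>x y. m (j x y) y = y" by blast+
  from a(2) have s2: "\<forall>x y z. m (j x y) z = j (m x z) (m y z)" "\<forall>x y z. m x (j y z) = j (m x y) (m x z)"
    by blast+
  from a(3) have s3: "\<forall>x y z. j (m x y) z = m (j x z) (j y z)" "\<forall>x y z. j x (m y z) = m (j x y) (j x z)"
    by blast+
  show ?thesis
    by (unfold_locales; rule s1[rule_format] s2[rule_format] s3[rule_format])
qed

theorem mainTheorem6:
  fixes meet join :: "'a \<Rightarrow> 'a \<Rightarrow> 'a"
  assumes "skew_lattice meet join"
    and "strongly_distributive meet join"
    and "co_strongly_distributive meet join"
  shows "strong_distributive_solution meet join \<and>
         skew_map meet join \<circ> skew_map meet join \<circ> skew_map meet join = skew_map meet join"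
proof -
  have S: "SL meet join" using SLI[OF assms] .
  have yb: "is_YB_solution (skew_map meet join)" using SL.yb[OF S] .
  have r3: "skew_map meet join \<circ> skew_map meet join \<circ> skew_map meet join = skew_map meet join"
    using SL.r3[OF S] .
  show ?thesis unfolding strong_distributive_solution_def using yb r3 assms(1) by (intro conjI)
qed

end
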